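(* Let $u\le v$ be positive integers, $n\ge0$, $I\in\mathrm{Hilb}^n(\{x^uy^v=0\},0)$, and $J^k=I\cap(x^ky^k)$. Let $0\le k\le v-2$ and suppose each of $J^k$ and $J^{k+1}$ is of type ① or ② (as defined below), with exponent pairs $(i_k,j_k)$ and $(i_{k+1},j_{k+1})$ respectively. Then (inequalities of pairs are componentwise): (1) if both are of type ①, then either $(i_k,j_k)=(i_{k+1},j_{k+1})$ or $(i_k,j_k)\ge(i_{k+1}+1,j_{k+1}+1)$; (2) if both are of type ②, then $(i_k,j_k)\ge(i_{k+1}+1,j_{k+1}+1)$; (3) if $J^k$ is of type ① and $J^{k+1}$ of type ②, then $(i_k,j_k)\ge(i_{k+1},j_{k+1})$; (4) if $J^k$ is of type ② and $J^{k+1}$ of type ①, then $(i_k,j_k)\ge(i_{k+1}+1,j_{k+1}+1)$.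
   Context: $\mathrm{Hilb}^n(\{x^uy^v=0\},0)$ is the set of ideals $I\subset\mathbb{C}[[x,y]]$ with $\dim_{\mathbb{C}}\mathbb{C}[[x,y]]/I=n$, supported at the origin, with $x^uy^v\in I$. For $0\le k\le v-1$: $J^k$ is of type ① with exponent pair $(i,j)$ if there are $a,b\in\mathbb{C}\setminus\{0\}$, integers $i,j\ge1$ and $h\in\mathbb{C}[[x,y]]$ such that $E=x^ky^k(ax^{i}+by^{j})+x^{k+1}y^{k+1}h\in J^k$ and $J^k=J^{k+1}+(E)$; $J^k$ is of type ② with exponent pair $(i,j)$ if there are integers $i,j\ge1$ and $h_1,h_2\in\mathbb{C}[[x,y]]$ such that $E_1=x^ky^kx^{i}+x^{k+1}y^{k+1}h_1$ and $E_2=x^ky^ky^{j}+x^{k+1}y^{k+1}h_2$ lie in $J^k$ and $J^k=J^{k+1}+(E_1,E_2)$, while $J^k$ is not of type ①. *)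

theory Defs
  imports Complex_Main
begin

text \<open>Formal power series in two variables x, y over the complex numbers,
  represented by their coefficient functions: f (a,b) is the coefficient of x^a y^b.\<close>

type_synonym ps = "nat \<times> nat \<Rightarrow> complex"

definition ps_add :: "ps \<Rightarrow> ps \<Rightarrow> ps" where
  "ps_add f g = (\<lambda>p. f p + g p)"

definition ps_smult :: "complex \<Rightarrow> ps \<Rightarrow> ps" where
  "ps_smult c f = (\<lambda>p. c * f p)"

definition ps_mult :: "ps \<Rightarrow> ps \<Rightarrow> ps" where
  "ps_mult f g = (\<lambda>(a,b). \<Sum>i\<le>a. \<Sum>j\<le>b. f (i,j) * g (a - i, b - j))"

definition mon :: "nat \<Rightarrow> nat \<Rightarrow> ps" where
  "mon a b = (\<lambda>p. if p = (a,b) then 1 else 0)"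

definition ps_zero :: ps where "ps_zero = (\<lambda>p. 0)"

definition ps_ideal :: "ps set \<Rightarrow> bool" where
  "ps_ideal I \<longleftrightarrow> ps_zero \<in> I \<and> (\<forall>f\<in>I. \<forall>g\<in>I. ps_add f g \<in> I)
     \<and> (\<forall>f\<in>I. \<forall>g. ps_mult g f \<in> I)"

definition ps_gen :: "ps set \<Rightarrow> ps set" where
  "ps_gen S = \<Inter>{I. ps_ideal I \<and> S \<subseteq> I}"

definition lincomb :: "(nat \<Rightarrow> complex) \<Rightarrow> ps list \<Rightarrow> ps" where
  "lincomb c bs = (\<lambda>p. \<Sum>i<length bs. c i * (bs ! i) p)"

text \<open>dim_C C[[x,y]]/I = n: there are n series whose classes form a basis of the quotient.\<close>
definition quot_dim :: "ps set \<Rightarrow> nat \<Rightarrow> bool" where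
  "quot_dim I n \<longleftrightarrow> (\<exists>bs. length bs = n
      \<and> (\<forall>f. \<exists>c. ps_add f (ps_smult (-1) (lincomb c bs)) \<in> I)
      \<and> (\<forall>c. lincomb c bs \<in> I \<longrightarrow> (\<forall>i<n. c i = 0)))"

text \<open>Hilb^n({x^u y^v = 0}, 0). (Every ideal of finite colength in C[[x,y]] is
  supported at the origin, since C[[x,y]] is local.)\<close>
definition hilb :: "nat \<Rightarrow> nat \<Rightarrow> nat \<Rightarrow> ps set \<Rightarrow> bool" where
  "hilb u v n I \<longleftrightarrow> ps_ideal I \<and> quot_dim I n \<and> mon u v \<in> I"

definition Jk :: "ps set \<Rightarrow> nat \<Rightarrow> ps set" where
  "Jk I k = I \<inter> {ps_mult (mon k k) g | g. True}"

definition type_one :: "ps set \<Rightarrow> nat \<Rightarrow> nat \<Rightarrow> nat \<Rightarrow> bool" where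
  "type_one I k i j \<longleftrightarrow> i \<ge> 1 \<and> j \<ge> 1 \<and>
     (\<exists>a b h. a \<noteq> 0 \<and> b \<noteq> 0 \<and>
       (let E = ps_add (ps_mult (mon k k) (ps_add (ps_smult a (mon i 0)) (ps_smult b (mon 0 j))))
                       (ps_mult (mon (k+1) (k+1)) h)
        in E \<in> Jk I k \<and> Jk I k = ps_gen (Jk I (k+1) \<union> {E})))"

definition type_two :: "ps set \<Rightarrow> nat \<Rightarrow> nat \<Rightarrow> nat \<Rightarrow> bool" where
  "type_two I k i j \<longleftrightarrow> i \<ge> 1 \<and> j \<ge> 1 \<and>
     (\<exists>h1 h2.
       (let E1 = ps_add (ps_mult (mon k k) (mon i 0)) (ps_mult (mon (k+1) (k+1)) h1);
            E2 = ps_add (ps_mult (mon k k) (mon 0 j)) (ps_mult (mon (k+1) (k+1)) h2)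
        in E1 \<in> Jk I k \<and> E2 \<in> Jk I k \<and> Jk I k = ps_gen (Jk I (k+1) \<union> {E1, E2})))
     \<and> \<not> (\<exists>i' j'. type_one I k i' j')"

end

theory Submission
  imports Defs
begin

lemma mult_mon:
  "ps_mult (mon a b) g (p,q) = (if a \<le> p \<and> b \<le> q then g (p-a, q-b) else 0)"
proof -
  have "ps_mult (mon a b) g (p,q) = (\<Sum>i\<le>p. \<Sum>j\<le>q. (if i = a \<and> j = b then g (p-i,q-j) else 0))"
    unfolding ps_mult_def mon_def by (auto intro!: sum.cong)
  also have "\<dots> = (\<Sum>i\<le>p. if i = a then (if b \<le> q then g (p-i,q-b) else 0) else 0)"
    by (rule sum.cong) (auto simp: sum.delta')
  also have "\<dots> = (if a \<le> p \<and> b \<le> q then g (p-a, q-b) else 0)"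
    by (auto simp: sum.delta')
  finally show ?thesis .
qed

definition dvK :: "nat \<Rightarrow> ps \<Rightarrow> bool" where
  "dvK K f \<longleftrightarrow> (\<forall>p q. (p < K \<or> q < K) \<longrightarrow> f (p,q) = 0)"

lemma range_mon: "f \<in> {ps_mult (mon K K) g | g. True} \<longleftrightarrow> dvK K f"
proof
  assume "f \<in> {ps_mult (mon K K) g | g. True}"
  then show "dvK K f" by (auto simp: dvK_def mult_mon)
next
  assume d: "dvK K f"
  have "f = ps_mult (mon K K) (\<lambda>(p,q). f (p+K, q+K))"
  proof
    fix x show "f x = ps_mult (mon K K) (\<lambda>(p,q). f (p+K, q+K)) x"
      using d by (cases x) (auto simp: mult_mon dvK_def)
  qed
  then show "f \<in> {ps_mult (mon K K) g | g. True}" by blast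
qed

lemma Jk_dv: "f \<in> Jk I K \<Longrightarrow> dvK K f"
  using range_mon unfolding Jk_def by blast

lemma mult_coeff:
  assumes "dvK K f"
  shows "ps_mult g f (K+m, K) = (\<Sum>p\<le>m. g (p,0) * f (K+m-p, K))"
    and "ps_mult g f (K, K+m) = (\<Sum>p\<le>m. g (0,p) * f (K, K+m-p))"
proof -
  have "ps_mult g f (K+m, K) = (\<Sum>i\<le>K+m. \<Sum>j\<le>K. g (i,j) * f (K+m-i, K-j))"
    by (simp add: ps_mult_def)
  also have "\<dots> = (\<Sum>i\<le>K+m. if i \<le> m then g (i,0) * f (K+m-i, K) else 0)"
  proof (rule sum.cong)
    fix i assume iK: "i \<in> {..K+m}"
    have "(\<Sum>j\<le>K. g (i,j) * f (K+m-i, K-j)) = (\<Sum>j\<le>K. if j = 0 \<and> i \<le> m then g (i,0) * f (K+m-i, K) else 0)"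
    proof (intro sum.cong refl)
      fix j assume jK: "j \<in> {..K}"
      have "0 < j \<Longrightarrow> K-j < K" using jK by auto
      moreover
      have "\<not> i \<le> m \<Longrightarrow> K+m-i < K" using iK by auto
      ultimately show "g (i,j) * f (K+m-i, K-j) = (if j = 0 \<and> i \<le> m then g (i,0) * f (K+m-i, K) else 0)"
        using assms unfolding dvK_def by (cases "j = 0") auto
    qed
    also have "\<dots> = (if i \<le> m then g (i,0) * f (K+m-i, K) else 0)"
      by (simp add: sum.delta)
    finally show "(\<Sum>j\<le>K. g (i,j) * f (K+m-i, K-j)) = (if i \<le> m then g (i,0) * f (K+m-i, K) else 0)" .
  qed simp
  also have "\<dots> = (\<Sum>i\<in>{..K+m} \<inter> {i. i \<le> m}. g (i,0) * f (K+m-i, K))"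
    by (simp add: sum.inter_restrict)
  also have "{..K+m} \<inter> {i. i \<le> m} = {..m}" by auto
  finally show "ps_mult g f (K+m, K) = (\<Sum>p\<le>m. g (p,0) * f (K+m-p, K))" .
next
  have "ps_mult g f (K, K+m) = (\<Sum>i\<le>K. \<Sum>j\<le>K+m. g (i,j) * f (K-i, K+m-j))"
    by (simp add: ps_mult_def)
  also have "\<dots> = (\<Sum>i\<le>K. if i = 0 then (\<Sum>j\<le>K+m. if j \<le> m then g (0,j) * f (K, K+m-j) else 0) else 0)"
  proof (rule sum.cong)
    fix i assume iK: "i \<in> {..K}"
    show "(\<Sum>j\<le>K+m. g (i,j) * f (K-i, K+m-j)) = (if i = 0 then (\<Sum>j\<le>K+m. if j \<le> m then g (0,j) * f (K, K+m-j) else 0) else 0)"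
    proof (cases "i = 0")
      case True
      show ?thesis
      proof (simp add: True, intro sum.cong refl)
        fix j assume jK: "j \<in> {..K+m}"
        have "\<not> j \<le> m \<Longrightarrow> K+m-j < K" using jK by auto
        then show "g (0,j) * f (K, K+m-j) = (if j \<le> m then g (0,j) * f (K, K+m-j) else 0)"
          using assms unfolding dvK_def by auto
      qed
    next
      case False
      then have "K - i < K" using iK by auto
      then show ?thesis using False assms unfolding dvK_def by auto
    qed
  qed simp
  also have "\<dots> = (\<Sum>j\<le>K+m. if j \<le> m then g (0,j) * f (K, K+m-j) else 0)"
    by (simp add: sum.delta)
  also have "\<dots> = (\<Sum>j\<in>{..K+m} \<inter> {i. i \<le> m}. g (0,j) * f (K, K+m-j))"
    by (simp add: sum.inter_restrict)
  also have "{..K+m} \<inter> {i. i \<le> m} = {..m}" by auto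
  finally show "ps_mult g f (K, K+m) = (\<Sum>p\<le>m. g (0,p) * f (K, K+m-p))" .
qed



lemma gen_sub: "ps_ideal T \<Longrightarrow> S \<subseteq> T \<Longrightarrow> ps_gen S \<subseteq> T"
  unfolding ps_gen_def by blast

lemma dvK_mult: "dvK K f \<Longrightarrow> dvK K (ps_mult g f)"
  unfolding dvK_def ps_mult_def by auto

lemma dvK_add: "dvK K f \<Longrightarrow> dvK K f' \<Longrightarrow> dvK K (ps_add f f')"
  unfolding dvK_def ps_add_def by auto

lemma Ecoef: "ps_add (ps_mult (mon k k) X) (ps_mult (mon (k+1) (k+1)) h) (p,q) =
   (if k \<le> p \<and> k \<le> q then X (p-k,q-k) else 0) + (if k < p \<and> k < q then h (p-k-1,q-k-1) else 0)"
  by (simp add: ps_add_def mult_mon Suc_le_eq)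

lemma low_zero:
  assumes "dvK K f" and "\<forall>m<i. f (K+m,K) = 0" and "m < i"
  shows "ps_mult g f (K+m, K) = 0"
proof -
  have "ps_mult g f (K+m, K) = (\<Sum>p\<le>m. g (p,0) * f (K+m-p, K))" by (rule mult_coeff(1)[OF assms(1)])
  also have "\<dots> = 0"
  proof (rule sum.neutral, intro ballI)
    fix p assume "p \<in> {..m}"
    then have "K+m-p = K+(m-p)" "m - p < i" using assms(3) by auto
    then show "g (p,0) * f (K+m-p, K) = 0" using assms(2) by simp
  qed
  finally show ?thesis .
qed

lemma low_zero2:
  assumes "dvK K f" and "\<forall>m<i. f (K,K+m) = 0" and "m < i"
  shows "ps_mult g f (K, K+m) = 0"
proof -
  have "ps_mult g f (K, K+m) = (\<Sum>p\<le>m. g (0,p) * f (K, K+m-p))" by (rule mult_coeff(2)[OF assms(1)])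
  also have "\<dots> = 0"
  proof (rule sum.neutral, intro ballI)
    fix p assume "p \<in> {..m}"
    then have "K+m-p = K+(m-p)" "m - p < i" using assms(3) by auto
    then show "g (0,p) * f (K, K+m-p) = 0" using assms(2) by simp
  qed
  finally show ?thesis .
qed

lemma lead1:
  assumes "dvK K f" and "\<forall>m<i. f (K+m,K) = 0"
  shows "ps_mult g f (K+i, K) = g (0,0) * f (K+i, K)"
proof -
  have "ps_mult g f (K+i, K) = (\<Sum>p\<le>i. g (p,0) * f (K+i-p, K))" by (rule mult_coeff(1)[OF assms(1)])
  also have "\<dots> = (\<Sum>p\<le>i. if p = 0 then g (0,0) * f (K+i, K) else 0)"
  proof (rule sum.cong[OF refl])
    fix p assume "p \<in> {..i}"
    then have "0 < p \<Longrightarrow> K+i-p = K+(i-p) \<and> i - p < i" by auto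
    then show "g (p,0) * f (K+i-p, K) = (if p = 0 then g (0,0) * f (K+i, K) else 0)"
      using assms(2) by (cases "p = 0") auto
  qed
  also have "\<dots> = g (0,0) * f (K+i, K)" by (simp add: sum.delta)
  finally show ?thesis .
qed

lemma lead2:
  assumes "dvK K f" and "\<forall>m<i. f (K,K+m) = 0"
  shows "ps_mult g f (K, K+i) = g (0,0) * f (K, K+i)"
proof -
  have "ps_mult g f (K, K+i) = (\<Sum>p\<le>i. g (0,p) * f (K, K+i-p))" by (rule mult_coeff(2)[OF assms(1)])
  also have "\<dots> = (\<Sum>p\<le>i. if p = 0 then g (0,0) * f (K, K+i) else 0)"
  proof (rule sum.cong[OF refl])
    fix p assume "p \<in> {..i}"
    then have "0 < p \<Longrightarrow> K+i-p = K+(i-p) \<and> i - p < i" by auto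
    then show "g (0,p) * f (K, K+i-p) = (if p = 0 then g (0,0) * f (K, K+i) else 0)"
      using assms(2) by (cases "p = 0") auto
  qed
  also have "\<dots> = g (0,0) * f (K, K+i)" by (simp add: sum.delta)
  finally show ?thesis .
qed

lemma level_one:
  assumes "type_one I K i j"
  obtains a b where "a \<noteq> 0" "b \<noteq> 0"
    "\<And>f. f \<in> Jk I K \<Longrightarrow> (\<forall>m<i. f (K+m,K) = 0) \<and> (\<forall>m<j. f (K,K+m) = 0)
        \<and> f (K,K+j) * a = f (K+i,K) * b"
proof -
  from assms obtain a b h where ab: "a \<noteq> 0" "b \<noteq> 0" and ij: "1 \<le> i" "1 \<le> j"
    and gen: "Jk I K = ps_gen (Jk I (K+1) \<union> {ps_add (ps_mult (mon K K) (ps_add (ps_smult a (mon i 0)) (ps_smult b (mon 0 j))))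
                       (ps_mult (mon (K+1) (K+1)) h)})"
    unfolding type_one_def Let_def by blast
  define T where "T = {f. dvK K f \<and> (\<forall>m<i. f (K+m,K) = 0) \<and> (\<forall>m<j. f (K,K+m) = 0)
        \<and> f (K,K+j) * a = f (K+i,K) * b}"
  have "ps_ideal T"
    unfolding ps_ideal_def
  proof (intro conjI ballI allI)
    show "ps_zero \<in> T" by (simp add: T_def ps_zero_def dvK_def)
  next
    fix f g assume "f \<in> T" "g \<in> T"
    then show "ps_add f g \<in> T" unfolding T_def
      by (auto simp: dvK_add) (auto simp: ps_add_def algebra_simps)
  next
    fix f g assume f: "f \<in> T"
    then have d: "dvK K f" and z1: "\<forall>m<i. f (K+m,K) = 0" and z2: "\<forall>m<j. f (K,K+m) = 0"
      and r: "f (K,K+j) * a = f (K+i,K) * b" unfolding T_def by auto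
    show "ps_mult g f \<in> T" unfolding T_def
      using dvK_mult[OF d] low_zero[OF d z1] low_zero2[OF d z2] lead1[OF d z1] lead2[OF d z2] r
      by (simp add: mult.assoc)
  qed
  moreover have "Jk I (K+1) \<union> {ps_add (ps_mult (mon K K) (ps_add (ps_smult a (mon i 0)) (ps_smult b (mon 0 j))))
                       (ps_mult (mon (K+1) (K+1)) h)} \<subseteq> T"
  proof (intro Un_least subsetI)
    fix f assume "f \<in> Jk I (K+1)"
    then have "dvK (K+1) f" by (rule Jk_dv)
    then show "f \<in> T" unfolding T_def dvK_def by auto
  next
    fix f assume "f \<in> {ps_add (ps_mult (mon K K) (ps_add (ps_smult a (mon i 0)) (ps_smult b (mon 0 j))))
                       (ps_mult (mon (K+1) (K+1)) h)}"
    then have fe: "\<And>p q. f (p,q) = (if K \<le> p \<and> K \<le> q then a * (if (p-K,q-K) = (i,0) then 1 else 0) + b * (if (p-K,q-K) = (0,j) then 1 else 0) else 0) + (if K < p \<and> K < q then h (p-K-1,q-K-1) else 0)"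
      by (simp only: singleton_iff Ecoef) (simp add: ps_add_def ps_smult_def mon_def)
    show "f \<in> T" using ij unfolding T_def dvK_def by (auto simp: fe)
  qed
  ultimately have "Jk I K \<subseteq> T" unfolding gen by (rule gen_sub)
  then show ?thesis using that[OF ab] unfolding T_def by blast
qed


lemma level_two:
  assumes "type_two I K i j"
  shows "\<And>f. f \<in> Jk I K \<Longrightarrow> (\<forall>m<i. f (K+m,K) = 0) \<and> (\<forall>m<j. f (K,K+m) = 0)"
proof -
  from assms obtain h1 h2 where ij: "1 \<le> i" "1 \<le> j"
    and gen: "Jk I K = ps_gen (Jk I (K+1) \<union> {ps_add (ps_mult (mon K K) (mon i 0)) (ps_mult (mon (K+1) (K+1)) h1),
        ps_add (ps_mult (mon K K) (mon 0 j)) (ps_mult (mon (K+1) (K+1)) h2)})"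
    unfolding type_two_def Let_def by blast
  define T where "T = {f. dvK K f \<and> (\<forall>m<i. f (K+m,K) = 0) \<and> (\<forall>m<j. f (K,K+m) = 0)}"
  have "ps_ideal T"
    unfolding ps_ideal_def
  proof (intro conjI ballI allI)
    show "ps_zero \<in> T" by (simp add: T_def ps_zero_def dvK_def)
  next
    fix f g assume "f \<in> T" "g \<in> T"
    then show "ps_add f g \<in> T" unfolding T_def
      by (auto simp: dvK_add) (auto simp: ps_add_def algebra_simps)
  next
    fix f g assume f: "f \<in> T"
    then have d: "dvK K f" and z1: "\<forall>m<i. f (K+m,K) = 0" and z2: "\<forall>m<j. f (K,K+m) = 0"
      unfolding T_def by auto
    show "ps_mult g f \<in> T" unfolding T_def
      using dvK_mult[OF d] low_zero[OF d z1] low_zero2[OF d z2] by simp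
  qed
  moreover have "Jk I (K+1) \<union> {ps_add (ps_mult (mon K K) (mon i 0)) (ps_mult (mon (K+1) (K+1)) h1),
        ps_add (ps_mult (mon K K) (mon 0 j)) (ps_mult (mon (K+1) (K+1)) h2)} \<subseteq> T"
  proof (intro Un_least subsetI)
    fix f assume "f \<in> Jk I (K+1)"
    then have "dvK (K+1) f" by (rule Jk_dv)
    then show "f \<in> T" unfolding T_def dvK_def by auto
  next
    fix f assume "f \<in> {ps_add (ps_mult (mon K K) (mon i 0)) (ps_mult (mon (K+1) (K+1)) h1),
        ps_add (ps_mult (mon K K) (mon 0 j)) (ps_mult (mon (K+1) (K+1)) h2)}"
    then consider "f = ps_add (ps_mult (mon K K) (mon i 0)) (ps_mult (mon (K+1) (K+1)) h1)"
      | "f = ps_add (ps_mult (mon K K) (mon 0 j)) (ps_mult (mon (K+1) (K+1)) h2)" by blast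
    then show "f \<in> T"
    proof cases
      case 1
      have fe: "\<And>p q. f (p,q) = (if K \<le> p \<and> K \<le> q then (if (p-K,q-K) = (i,0) then 1 else 0) else 0) + (if K < p \<and> K < q then h1 (p-K-1,q-K-1) else 0)"
        unfolding 1 Ecoef by (simp add: mon_def)
      show ?thesis using ij unfolding T_def dvK_def by (auto simp: fe)
    next
      case 2
      have fe: "\<And>p q. f (p,q) = (if K \<le> p \<and> K \<le> q then (if (p-K,q-K) = (0,j) then 1 else 0) else 0) + (if K < p \<and> K < q then h2 (p-K-1,q-K-1) else 0)"
        unfolding 2 Ecoef by (simp add: mon_def)
      show ?thesis using ij unfolding T_def dvK_def by (auto simp: fe)
    qed
  qed
  ultimately have "Jk I K \<subseteq> T" unfolding gen by (rule gen_sub)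
  then show "\<And>f. f \<in> Jk I K \<Longrightarrow> (\<forall>m<i. f (K+m,K) = 0) \<and> (\<forall>m<j. f (K,K+m) = 0)"
    unfolding T_def by blast
qed


lemma inJk: "f \<in> I \<Longrightarrow> dvK K f \<Longrightarrow> f \<in> Jk I K"
  unfolding Jk_def using range_mon by blast

lemma Jk_sub: "Jk I K \<subseteq> I" unfolding Jk_def by blast

lemma shift_two:
  assumes "type_two I k i j" and id: "ps_ideal I"
  shows "1 \<le> i" "1 \<le> j"
    "\<exists>f\<in>Jk I (k+1). f (k+1+(i-1), k+1) = 1"
    "\<exists>f\<in>Jk I (k+1). f (k+1, k+1+(j-1)) = 1"
proof -
  from assms obtain h1 h2 where ij: "1 \<le> i" "1 \<le> j"
    and E1: "ps_add (ps_mult (mon k k) (mon i 0)) (ps_mult (mon (k+1) (k+1)) h1) \<in> Jk I k"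
    and E2: "ps_add (ps_mult (mon k k) (mon 0 j)) (ps_mult (mon (k+1) (k+1)) h2) \<in> Jk I k"
    unfolding type_two_def Let_def by blast
  show "1 \<le> i" "1 \<le> j" by fact+
  let ?E1 = "ps_add (ps_mult (mon k k) (mon i 0)) (ps_mult (mon (k+1) (k+1)) h1)"
  let ?E2 = "ps_add (ps_mult (mon k k) (mon 0 j)) (ps_mult (mon (k+1) (k+1)) h2)"
  have e1: "?E1 = (\<lambda>(p,q). (if k \<le> p \<and> k \<le> q then (if (p-k,q-k) = (i,0) then 1 else 0) else 0) + (if k < p \<and> k < q then h1 (p-k-1,q-k-1) else 0))"
    apply (rule ext) apply (clarify)
    unfolding Ecoef by (simp add: mon_def)
  have e2: "?E2 = (\<lambda>(p,q). (if k \<le> p \<and> k \<le> q then (if (p-k,q-k) = (0,j) then 1 else 0) else 0) + (if k < p \<and> k < q then h2 (p-k-1,q-k-1) else 0))"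
    apply (rule ext) apply (clarify)
    unfolding Ecoef by (simp add: mon_def)
  let ?f1 = "ps_mult (mon 0 1) ?E1"
  have "?f1 \<in> I" using id E1 Jk_sub unfolding ps_ideal_def by blast
  moreover have "dvK (k+1) ?f1" using ij unfolding dvK_def unfolding e1 by (auto simp: mult_mon)
  moreover have "?f1 (k+1+(i-1), k+1) = 1" using ij unfolding e1 by (simp add: mult_mon)
  ultimately show "\<exists>f\<in>Jk I (k+1). f (k+1+(i-1), k+1) = 1" using inJk by blast
  let ?f2 = "ps_mult (mon 1 0) ?E2"
  have "?f2 \<in> I" using id E2 Jk_sub unfolding ps_ideal_def by blast
  moreover have "dvK (k+1) ?f2" using ij unfolding dvK_def unfolding e2 by (auto simp: mult_mon)
  moreover have "?f2 (k+1, k+1+(j-1)) = 1" using ij unfolding e2 by (simp add: mult_mon)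
  ultimately show "\<exists>f\<in>Jk I (k+1). f (k+1, k+1+(j-1)) = 1" using inJk by blast
qed

lemma shift_one:
  assumes "type_one I k i j" and id: "ps_ideal I"
  shows "\<exists>a b f. a \<noteq> 0 \<and> b \<noteq> 0 \<and> f \<in> Jk I (k+1) \<and> (\<forall>m. f (k+1+m, k+1) = (if m = i then a else 0))
     \<and> (\<forall>m. f (k+1, k+1+m) = (if m = j then b else 0))"
proof -
  from assms obtain a b h where ab: "a \<noteq> 0" "b \<noteq> 0" and ij: "1 \<le> i" "1 \<le> j"
    and E: "ps_add (ps_mult (mon k k) (ps_add (ps_smult a (mon i 0)) (ps_smult b (mon 0 j))))
                       (ps_mult (mon (k+1) (k+1)) h) \<in> Jk I k"
    unfolding type_one_def Let_def by blast
  let ?E = "ps_add (ps_mult (mon k k) (ps_add (ps_smult a (mon i 0)) (ps_smult b (mon 0 j))))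
                       (ps_mult (mon (k+1) (k+1)) h)"
  have e: "?E = (\<lambda>(p,q). (if k \<le> p \<and> k \<le> q then a * (if (p-k,q-k) = (i,0) then 1 else 0) + b * (if (p-k,q-k) = (0,j) then 1 else 0) else 0) + (if k < p \<and> k < q then h (p-k-1,q-k-1) else 0))"
    apply (rule ext) apply (clarify)
    unfolding Ecoef by (simp add: ps_add_def ps_smult_def mon_def)
  let ?f = "ps_mult (mon 1 1) ?E"
  have "?f \<in> I" using id E Jk_sub unfolding ps_ideal_def by blast
  moreover have "dvK (k+1) ?f" using ij unfolding dvK_def unfolding e by (auto simp: mult_mon)
  moreover have "\<forall>m. ?f (k+1+m, k+1) = (if m = i then a else 0)" using ij unfolding e by (simp add: mult_mon)
  moreover have "\<forall>m. ?f (k+1, k+1+m) = (if m = j then b else 0)" using ij unfolding e by (simp add: mult_mon)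
  ultimately show ?thesis using inJk ab by blast
qed

theorem mainTheorem8:
  fixes u v n k i0 j0 i1 j1 :: nat and I :: "ps set"
  assumes "1 \<le> u" and "u \<le> v"
    and "hilb u v n I"
    and "k + 2 \<le> v"
    and "type_one I k i0 j0 \<or> type_two I k i0 j0"
    and "type_one I (k+1) i1 j1 \<or> type_two I (k+1) i1 j1"
  shows "(type_one I k i0 j0 \<and> type_one I (k+1) i1 j1 \<longrightarrow>
            ((i0, j0) = (i1, j1) \<or> (i0 \<ge> i1 + 1 \<and> j0 \<ge> j1 + 1)))
       \<and> (type_two I k i0 j0 \<and> type_two I (k+1) i1 j1 \<longrightarrow>
            (i0 \<ge> i1 + 1 \<and> j0 \<ge> j1 + 1))
       \<and> (type_one I k i0 j0 \<and> type_two I (k+1) i1 j1 \<longrightarrow>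
            (i0 \<ge> i1 \<and> j0 \<ge> j1))
       \<and> (type_two I k i0 j0 \<and> type_one I (k+1) i1 j1 \<longrightarrow>
            (i0 \<ge> i1 + 1 \<and> j0 \<ge> j1 + 1))"
proof -
  have id: "ps_ideal I" using assms(3) unfolding hilb_def by blast
  have AB: "\<And>f. f \<in> Jk I (k+1) \<Longrightarrow> (\<forall>m<i1. f (k+1+m,k+1) = 0) \<and> (\<forall>m<j1. f (k+1,k+1+m) = 0)"
  proof -
    fix f assume f: "f \<in> Jk I (k+1)"
    show "(\<forall>m<i1. f (k+1+m,k+1) = 0) \<and> (\<forall>m<j1. f (k+1,k+1+m) = 0)"
      using assms(6)
    proof
      assume "type_one I (k+1) i1 j1"
      then obtain a b where "a \<noteq> 0" "b \<noteq> 0" "\<And>f. f \<in> Jk I (k+1) \<Longrightarrow> (\<forall>m<i1. f (k+1+m,k+1) = 0) \<and> (\<forall>m<j1. f (k+1,k+1+m) = 0)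
        \<and> f (k+1,k+1+j1) * a = f (k+1+i1,k+1) * b" by (rule level_one) blast
      then show ?thesis using f by blast
    next
      assume "type_two I (k+1) i1 j1"
      then show ?thesis using f level_two by blast
    qed
  qed
  have two: "i0 \<ge> i1 + 1 \<and> j0 \<ge> j1 + 1" if t: "type_two I k i0 j0"
  proof -
    obtain f1 where f1: "f1 \<in> Jk I (k+1)" "f1 (k+1+(i0-1), k+1) = 1" using shift_two(3)[OF t id] by blast
    obtain f2 where f2: "f2 \<in> Jk I (k+1)" "f2 (k+1, k+1+(j0-1)) = 1" using shift_two(4)[OF t id] by blast
    have "\<not> i0 - 1 < i1" using AB[OF f1(1)] f1(2) by auto
    moreover have "\<not> j0 - 1 < j1" using AB[OF f2(1)] f2(2) by auto
    ultimately show ?thesis using shift_two(1,2)[OF t id] by auto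
  qed
  have one: "i0 \<ge> i1 \<and> j0 \<ge> j1 \<and> (type_one I (k+1) i1 j1 \<longrightarrow> ((i0, j0) = (i1, j1) \<or> (i0 \<ge> i1 + 1 \<and> j0 \<ge> j1 + 1)))"
    if t: "type_one I k i0 j0"
  proof -
    obtain a b f where ab: "a \<noteq> 0" "b \<noteq> 0" and f: "f \<in> Jk I (k+1)"
      and fx: "\<forall>m. f (k+1+m, k+1) = (if m = i0 then a else 0)"
      and fy: "\<forall>m. f (k+1, k+1+m) = (if m = j0 then b else 0)"
      using shift_one[OF t id] by blast
    have g1: "i0 \<ge> i1" using AB[OF f] fx ab by (metis not_le)
    have g2: "j0 \<ge> j1" using AB[OF f] fy ab by (metis not_le)
    have "(i0, j0) = (i1, j1) \<or> (i0 \<ge> i1 + 1 \<and> j0 \<ge> j1 + 1)" if t1: "type_one I (k+1) i1 j1"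
    proof -
      obtain a' b' where ab': "a' \<noteq> 0" "b' \<noteq> 0" and
        R: "\<And>f. f \<in> Jk I (k+1) \<Longrightarrow> (\<forall>m<i1. f (k+1+m,k+1) = 0) \<and> (\<forall>m<j1. f (k+1,k+1+m) = 0)
        \<and> f (k+1,k+1+j1) * a' = f (k+1+i1,k+1) * b'" using level_one[OF t1] by blast
      have "(if j1 = j0 then b else 0) * a' = (if i1 = i0 then a else 0) * b'"
        using R[OF f] fx fy by simp
      then have "(j1 = j0) = (i1 = i0)" using ab ab' by (auto split: if_splits)
      then show ?thesis using g1 g2 by auto
    qed
    then show ?thesis using g1 g2 by blast
  qed
  show ?thesis using one two by auto
qed

end
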